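(* Let $D_1,D_2\subset\mathbb{C}$ be domains and for $j=1,2$ let $p_j\colon E\to D_j$ be a holomorphic universal covering that is not injective. Then there exist automorphisms $\varphi_1,\varphi_2\in\operatorname{Aut}(E)$ and a point $q=(q_1,q_2)\in E^2$ with $q_1\neq q_2$ such that $p_j(\varphi_j(q_1))=p_j(\varphi_j(q_2))$ for $j=1,2$ and $$\det\begin{bmatrix}(p_1\circ\varphi_1)'(q_1) & (p_1\circ\varphi_1)'(q_2)\\ (p_2\circ\varphi_2)'(q_1) & (p_2\circ\varphi_2)'(q_2)\end{bmatrix}\neq0.$$
   Context: $E$ denotes the open unit disc in $\mathbb{C}$ and $\operatorname{Aut}(E)$ its group of biholomorphic self-maps. *)

theory Defs
  imports "HOL-Complex_Analysis.Complex_Analysis"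
begin

abbreviation unit_disc :: "complex set" where
  "unit_disc \<equiv> ball 0 1"

definition disc_aut :: "(complex \<Rightarrow> complex) set" where
  "disc_aut = {f. f holomorphic_on unit_disc \<and> f ` unit_disc = unit_disc \<and>
      (\<exists>g. g holomorphic_on unit_disc \<and> g ` unit_disc = unit_disc \<and>
           (\<forall>z\<in>unit_disc. g (f z) = z) \<and> (\<forall>z\<in>unit_disc. f (g z) = z))}"

definition is_domain :: "complex set \<Rightarrow> bool" where
  "is_domain D \<longleftrightarrow> open D \<and> connected D \<and> D \<noteq> {}"

text \<open>Holomorphic universal covering E \<rightarrow> D (E is simply connected, so any
  covering map from E is universal).\<close>
definition holo_univ_covering :: "(complex \<Rightarrow> complex) \<Rightarrow> complex set \<Rightarrow> bool" where
  "holo_univ_covering p D \<longleftrightarrow> p holomorphic_on unit_disc \<and> covering_space unit_disc p D"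

end

theory Submission
  imports Defs
begin

definition Mb :: "complex \<Rightarrow> complex \<Rightarrow> complex" where
  "Mb w z = (z - w) / (1 - cnj w * z)"

definition rho :: "complex \<Rightarrow> complex \<Rightarrow> real" where
  "rho z w = norm (Mb z w)"

lemma Mb_eq: "Mb w z = Moebius_function 0 w z"
  by (simp add: Mb_def Moebius_function_simple)

lemma Mb_lt1: "norm w < 1 \<Longrightarrow> norm z < 1 \<Longrightarrow> norm (Mb w z) < 1"
  by (simp add: Mb_eq Moebius_function_norm_lt_1)

lemma Mb_comp: "norm w < 1 \<Longrightarrow> norm z < 1 \<Longrightarrow> Mb (-w) (Mb w z) = z"
  unfolding Mb_eq by (rule Moebius_function_compose) auto

lemma Mb_comp': "norm w < 1 \<Longrightarrow> norm z < 1 \<Longrightarrow> Mb w (Mb (-w) z) = z"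
  unfolding Mb_eq by (rule Moebius_function_compose) auto

lemma Mb_holo: "norm w < 1 \<Longrightarrow> Mb w holomorphic_on unit_disc"
proof -
  assume "norm w < 1"
  then have "Moebius_function 0 w holomorphic_on unit_disc" by (rule Moebius_function_holomorphic)
  moreover have "Mb w = Moebius_function 0 w" by (rule ext) (simp add: Mb_eq)
  ultimately show ?thesis by simp
qed

lemma denom_nz: "norm w < 1 \<Longrightarrow> norm z < 1 \<Longrightarrow> 1 - cnj w * z \<noteq> 0"
proof
  assume a: "norm w < 1" "norm z < 1" "1 - cnj w * z = 0"
  then have "cnj w * z = 1" by simp
  then have "norm (cnj w * z) = 1" by simp
  moreover have "norm w * norm z < 1 * 1" by (rule mult_strict_mono') (use a in auto)
  ultimately show False by (simp add: norm_mult)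
qed

lemma disc_autI:
  assumes "f holomorphic_on unit_disc" "g holomorphic_on unit_disc"
    "f ` unit_disc \<subseteq> unit_disc" "g ` unit_disc \<subseteq> unit_disc"
    "\<And>z. z \<in> unit_disc \<Longrightarrow> g (f z) = z" "\<And>z. z \<in> unit_disc \<Longrightarrow> f (g z) = z"
  shows "f \<in> disc_aut"
proof -
  have fE: "f ` unit_disc = unit_disc"
    using assms by (metis image_subset_iff subsetI subset_antisym image_eqI)
  have gE: "g ` unit_disc = unit_disc"
    using assms by (metis image_subset_iff subsetI subset_antisym image_eqI)
  show ?thesis unfolding disc_aut_def using assms fE gE by blast
qed

lemma disc_aut_comp:
  assumes "f \<in> disc_aut" "h \<in> disc_aut" shows "f \<circ> h \<in> disc_aut"
proof -
  obtain f' where f: "f holomorphic_on unit_disc" "f ` unit_disc = unit_disc" "f' holomorphic_on unit_disc"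
    "f' ` unit_disc = unit_disc" "\<forall>z\<in>unit_disc. f' (f z) = z" "\<forall>z\<in>unit_disc. f (f' z) = z"
    using assms(1) unfolding disc_aut_def by blast
  obtain h' where h: "h holomorphic_on unit_disc" "h ` unit_disc = unit_disc" "h' holomorphic_on unit_disc"
    "h' ` unit_disc = unit_disc" "\<forall>z\<in>unit_disc. h' (h z) = z" "\<forall>z\<in>unit_disc. h (h' z) = z"
    using assms(2) unfolding disc_aut_def by blast
  show ?thesis
  proof (rule disc_autI[where g="h' \<circ> f'"])
    show "f \<circ> h holomorphic_on unit_disc" using f h by (intro holomorphic_on_compose) auto
    show "h' \<circ> f' holomorphic_on unit_disc" using f h by (intro holomorphic_on_compose) auto
  next
    have fE: "\<And>z. z \<in> unit_disc \<Longrightarrow> f z \<in> unit_disc" using f(2) by blast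
    have f'E: "\<And>z. z \<in> unit_disc \<Longrightarrow> f' z \<in> unit_disc" using f(4) by blast
    have hE: "\<And>z. z \<in> unit_disc \<Longrightarrow> h z \<in> unit_disc" using h(2) by blast
    have h'E: "\<And>z. z \<in> unit_disc \<Longrightarrow> h' z \<in> unit_disc" using h(4) by blast
    show "(f \<circ> h) ` unit_disc \<subseteq> unit_disc" "(h' \<circ> f') ` unit_disc \<subseteq> unit_disc"
      using fE f'E hE h'E by auto
    show "\<And>z. z \<in> unit_disc \<Longrightarrow> (h' \<circ> f') ((f \<circ> h) z) = z"
      using f(5) h(5) hE by simp
    show "\<And>z. z \<in> unit_disc \<Longrightarrow> (f \<circ> h) ((h' \<circ> f') z) = z"
      using f(6) h(6) f'E by simp
  qed
qed

lemma disc_aut_regular: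
  assumes "f \<in> disc_aut" "z \<in> unit_disc" shows "deriv f z \<noteq> 0"
proof -
  obtain f' where f: "f holomorphic_on unit_disc" "\<forall>z\<in>unit_disc. f' (f z) = z"
    using assms(1) unfolding disc_aut_def by blast
  then have "inj_on f unit_disc" by (metis inj_onI)
  then show ?thesis using holomorphic_injective_imp_regular f assms(2) by blast
qed

lemma cov_loc_inj:
  assumes cov: "covering_space unit_disc p D" and z: "z \<in> unit_disc"
  obtains T where "z \<in> T" "open T" "T \<subseteq> unit_disc" "inj_on p T"
proof -
  obtain T u q where T: "z \<in> T" "openin (top_of_set unit_disc) T" "homeomorphism T u p q"
    using covering_space_local_homeomorphism [OF cov z] by metis
  have "open T" using T(2) openin_open_trans open_ball by blast
  moreover have "T \<subseteq> unit_disc" using T(2) openin_imp_subset by blast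
  moreover have "inj_on p T" using T(3) unfolding homeomorphism_def by (metis inj_on_inverseI)
  ultimately show ?thesis using that T(1) by blast
qed

lemma cov_regular:
  assumes hol: "p holomorphic_on unit_disc" and cov: "covering_space unit_disc p D" and z: "z \<in> unit_disc"
  shows "deriv p z \<noteq> 0"
proof -
  obtain T where T: "z \<in> T" "open T" "T \<subseteq> unit_disc" "inj_on p T"
    using cov_loc_inj [OF cov z] by blast
  show ?thesis using holomorphic_injective_imp_regular [of p T z] T holomorphic_on_subset [OF hol T(3)]
    by blast
qed

lemma cov_lift_holo:
  assumes hol: "p holomorphic_on unit_disc" and cov: "covering_space unit_disc p D"
    and cg: "continuous_on unit_disc g" and gE: "g ` unit_disc \<subseteq> unit_disc"
    and pg: "\<And>y. y \<in> unit_disc \<Longrightarrow> p (g y) = p y"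
  shows "g holomorphic_on unit_disc"
  unfolding holomorphic_on_open [OF open_ball]
proof
  fix y assume y: "y \<in> unit_disc"
  then have gy: "g y \<in> unit_disc" using gE by blast
  obtain T where T: "g y \<in> T" "open T" "T \<subseteq> unit_disc" "inj_on p T"
    using cov_loc_inj [OF cov gy] by blast
  have holT: "p holomorphic_on T" using holomorphic_on_subset [OF hol T(3)] .
  obtain h where h: "h holomorphic_on p ` T" "\<And>x. x \<in> T \<Longrightarrow> h (p x) = x"
    using holomorphic_has_inverse [OF holT T(2) T(4)] by metis
  have opT: "open (p ` T)" using open_mapping_thm3 [OF holT T(2) T(4)] .
  define V where "V = unit_disc \<inter> g -` T"
  have oV: "open V" unfolding V_def by (rule continuous_open_preimage [OF cg open_ball T(2)])
  have yV: "y \<in> V" using y T(1) by (simp add: V_def)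
  have eq: "(h \<circ> p) w = g w" if "w \<in> V" for w
  proof -
    have "g w \<in> T" "w \<in> unit_disc" using that by (auto simp: V_def)
    then show ?thesis using h(2) [of "g w"] pg [of w] by simp
  qed
  have py: "p y \<in> p ` T" using pg [OF y] T(1) by (metis image_eqI)
  have d1: "(p has_field_derivative deriv p y) (at y)" using holomorphic_derivI [OF hol open_ball y] .
  have d2: "(h has_field_derivative deriv h (p y)) (at (p y))" using holomorphic_derivI [OF h(1) opT py] .
  have "(h \<circ> p has_field_derivative deriv h (p y) * deriv p y) (at y)"
    using DERIV_chain [OF d2 d1] .
  then have "(g has_field_derivative deriv h (p y) * deriv p y) (at y)"
    using has_field_derivative_transform_within_open [of "h \<circ> p" _ y V g] eq oV yV by blast
  then show "\<exists>f'. (g has_field_derivative f') (at y)" by blast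
qed


lemma deck_exists:
  assumes hol: "p holomorphic_on unit_disc" and cov: "covering_space unit_disc p D"
    and ninj: "\<not> inj_on p unit_disc"
  obtains g where "g holomorphic_on unit_disc" "\<And>y. y \<in> unit_disc \<Longrightarrow> g y \<in> unit_disc"
    "\<And>y. y \<in> unit_disc \<Longrightarrow> p (g y) = p y" "\<And>y. y \<in> unit_disc \<Longrightarrow> g y \<noteq> y"
proof -
  obtain a b where ab: "a \<in> unit_disc" "b \<in> unit_disc" "a \<noteq> b" "p a = p b"
    using ninj unfolding inj_on_def by blast
  have contp: "continuous_on unit_disc p" using covering_space_imp_continuous [OF cov] .
  have pim: "p \<in> unit_disc \<rightarrow> D" using covering_space_imp_surjective [OF cov] by blast
  obtain g where g: "continuous_on unit_disc g" "g \<in> unit_disc \<rightarrow> unit_disc" "g a = b"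
      "\<And>y. y \<in> unit_disc \<Longrightarrow> p (g y) = p y"
    using covering_space_lift_strong [OF cov ab(2) ab(1) convex_imp_simply_connected [OF convex_ball]
        open_imp_locally_path_connected [OF open_ball] contp pim] ab(4) by metis
  have gE: "g ` unit_disc \<subseteq> unit_disc" using g(2) by blast
  have holg: "g holomorphic_on unit_disc" using cov_lift_holo [OF hol cov g(1) gE g(4)] .
  have nofix: "g c \<noteq> c" if c: "c \<in> unit_disc" for c
  proof
    assume gc: "g c = c"
    have "g a = id a"
    proof (rule covering_space_lift_unique [OF cov, where f=p and T=unit_disc and ?g1.0=g and ?g2.0=id and a=c and x=a])
      show "g c = id c" using gc by simp
    qed (use contp pim g c ab(1) in \<open>auto intro: continuous_on_id convex_connected\<close>)
    then show False using g(3) ab(3) by simp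
  qed
  show ?thesis using that holg g(2,4) nofix by blast
qed


lemma norm_1_minus_cnj: "norm (1 - cnj z * z) = 1 - (norm z)^2" if "norm z < 1" for z :: complex
proof -
  have h: "cnj z * z = complex_of_real ((norm z)^2)"
    by (simp only: mult.commute[of "cnj z" z] complex_norm_square)
  have e: "1 - cnj z * z = complex_of_real (1 - (norm z)^2)"
    by (simp only: h of_real_diff of_real_1)
  have "0 \<le> 1 - (norm z)^2" using that
    by (metis abs_norm_cancel abs_square_le_1 diff_ge_0_iff_ge less_imp_le)
  then show ?thesis unfolding e norm_of_real by simp
qed

lemma disp_bound:
  assumes z: "norm z < 1" and w: "norm w < 1" and r: "rho z w \<le> r" "r < 1"
  shows "norm (w - z) \<le> r * (1 - (norm z)^2) / (1 - r)"
proof -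
  have dnz: "1 - cnj z * w \<noteq> 0" using denom_nz z w by blast
  have "norm (w - z) = rho z w * norm (1 - cnj z * w)"
    using dnz by (simp add: rho_def Mb_def norm_divide)
  also have "\<dots> \<le> r * norm (1 - cnj z * w)"
    by (rule mult_right_mono) (use r in auto)
  finally have 1: "norm (w - z) \<le> r * norm (1 - cnj z * w)" .
  have "1 - cnj z * w = (1 - cnj z * z) - cnj z * (w - z)" by (simp add: algebra_simps)
  then have "norm (1 - cnj z * w) \<le> norm (1 - cnj z * z) + norm (cnj z * (w - z))"
    by (metis norm_triangle_ineq4)
  also have "\<dots> \<le> (1 - (norm z)^2) + norm (w - z)"
    using z by (simp add: norm_1_minus_cnj norm_mult mult_left_le_one_le)
  finally have 2: "norm (1 - cnj z * w) \<le> (1 - (norm z)^2) + norm (w - z)" .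
  have r0: "0 \<le> r" using r(1) by (metis norm_ge_zero order_trans rho_def)
  have "norm (w - z) \<le> r * ((1 - (norm z)^2) + norm (w - z))"
    using 1 2 r0 by (meson mult_left_mono order_trans)
  then have "norm (w - z) * (1 - r) \<le> r * (1 - (norm z)^2)" by (simp add: algebra_simps)
  then show ?thesis using r(2) by (simp add: field_simps)
qed

lemma disp_unbounded:
  assumes hol: "g holomorphic_on unit_disc" and gE: "\<And>y. y \<in> unit_disc \<Longrightarrow> g y \<in> unit_disc"
    and nofix: "\<And>y. y \<in> unit_disc \<Longrightarrow> g y \<noteq> y" and r: "r < 1"
  shows "\<exists>z\<in>unit_disc. rho z (g z) > r"
proof (rule ccontr)
  assume "\<not> ?thesis"
  then have le: "\<And>z. z \<in> unit_disc \<Longrightarrow> rho z (g z) \<le> r" by force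
  define r' where "r' = max r (1/2)"
  have r': "0 < r'" "r' < 1" "r \<le> r'" using r by (auto simp: r'_def)
  have le': "norm (g z - z) \<le> r' * (1 - (norm z)^2) / (1 - r')" if "z \<in> unit_disc" for z
    using disp_bound [of z "g z" r'] le [OF that] r' gE [OF that] that by auto
  have g0: "g 0 \<noteq> 0" using nofix [of 0] by simp
  define \<epsilon> where "\<epsilon> = norm (g 0) * (1 - r') / r'"
  have \<epsilon>: "\<epsilon> > 0" using g0 r' by (simp add: \<epsilon>_def)
  define R where "R = sqrt (max (1/4) (1 - \<epsilon>/2))"
  have R2: "R^2 = max (1/4) (1 - \<epsilon>/2)" by (simp add: R_def)
  have R0: "R > 0" by (simp add: R_def)
  have R1: "R < 1" using \<epsilon> by (simp add: R_def) 
  have Rle: "1 - R^2 < \<epsilon>" using R2 \<epsilon> by simp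
  define B where "B = r' * (1 - R^2) / (1 - r')"
  have "norm (g 0 - 0) \<le> B"
  proof (rule maximum_modulus_frontier [where S="ball 0 R" and f="\<lambda>z. g z - z"])
    have sub: "cball 0 R \<subseteq> unit_disc" using R1 by auto
    have "g holomorphic_on ball 0 R" by (rule holomorphic_on_subset[OF hol]) (use sub in auto)
    then show "(\<lambda>z. g z - z) holomorphic_on interior (ball 0 R)"
      by (auto intro!: holomorphic_intros)
    have "(\<lambda>z. g z - z) holomorphic_on unit_disc" by (intro holomorphic_intros hol)
    then have "continuous_on unit_disc (\<lambda>z. g z - z)" by (rule holomorphic_on_imp_continuous_on)
    then show "continuous_on (closure (ball 0 R)) (\<lambda>z. g z - z)"
      using R0 sub by (simp add: continuous_on_subset)
    show "bounded (ball (0::complex) R)" by simp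
    show "norm (g z - z) \<le> B" if "z \<in> frontier (ball 0 R)" for z
    proof -
      have "norm z = R" using that R0 by simp
      then show ?thesis using le' [of z] R1 by (simp add: B_def)
    qed
    show "0 \<in> ball (0::complex) R" using R0 by simp
  qed
  moreover have "B < norm (g 0)"
  proof -
    have "r' * (1 - R^2) < r' * \<epsilon>" using Rle r' by simp
    also have "\<dots> = norm (g 0) * (1 - r')" using r' by (simp add: \<epsilon>_def)
    finally show ?thesis using r' by (simp add: B_def field_simps)
  qed
  ultimately show False by simp
qed


lemma cnj_mult_self_norm1: "norm (l::complex) = 1 \<Longrightarrow> cnj l * l = 1"
  using complex_norm_square[of l] by (simp add: mult.commute)

lemma rho_rot:
  assumes "norm l = 1" shows "rho (l * x) (l * y) = rho x y"
proof -
  have c: "cnj l * l = 1" using cnj_mult_self_norm1 assms .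
  have "cnj (l * x) * (l * y) = (cnj l * l) * (cnj x * y)" by (simp add: algebra_simps)
  then have e1: "1 - cnj (l * x) * (l * y) = 1 - cnj x * y"
    by (simp only: c mult_1_left)
  have e2: "l * y - l * x = l * (y - x)" by (simp add: algebra_simps)
  show ?thesis unfolding rho_def Mb_def e1 e2 norm_divide norm_mult assms by simp
qed

lemma Mb_num:
  assumes "1 - cnj c * x \<noteq> 0" "1 - cnj c * y \<noteq> 0"
  shows "Mb c y - Mb c x = (y - x) * (1 - cnj c * c) / ((1 - cnj c * x) * (1 - cnj c * y))"
  using assms unfolding Mb_def by (simp add: field_simps)

lemma Mb_den:
  assumes A: "1 - cnj c * x \<noteq> 0" and B: "1 - cnj c * y \<noteq> 0"
  shows "1 - cnj (Mb c x) * Mb c y = (1 - cnj c * c) * (1 - cnj x * y) / (cnj (1 - cnj c * x) * (1 - cnj c * y))"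
proof -
  define D where "D = cnj (1 - cnj c * x) * (1 - cnj c * y)"
  have a': "cnj (1 - cnj c * x) \<noteq> 0" using A by (metis complex_cnj_zero_iff)
  have D0: "D \<noteq> 0" using a' B by (simp add: D_def)
  have e: "cnj (Mb c x) * Mb c y = ((cnj x - cnj c) * (y - c)) / D"
    by (simp add: Mb_def D_def)
  have N: "D - (cnj x - cnj c) * (y - c) = (1 - cnj c * c) * (1 - cnj x * y)"
    by (simp add: D_def algebra_simps)
  have "1 - cnj (Mb c x) * Mb c y = D / D - ((cnj x - cnj c) * (y - c)) / D"
    using D0 by (simp add: e)
  also have "\<dots> = (D - (cnj x - cnj c) * (y - c)) / D" by (rule diff_divide_distrib[symmetric])
  finally show ?thesis using N by (simp add: D_def)
qed

lemma frac_aux: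
  fixes p q A A' B C :: complex
  assumes "C \<noteq> 0" "A \<noteq> 0" "B \<noteq> 0" "A' \<noteq> 0" "q \<noteq> 0"
  shows "(p * C / (A * B)) / (C * q / (A' * B)) = p / q * (A' / A)"
  using assms by (simp add: field_simps)

lemma rho_Mb:
  assumes c: "norm c < 1" and x: "norm x < 1" and y: "norm y < 1"
  shows "rho (Mb c x) (Mb c y) = rho x y"
proof -
  have A: "1 - cnj c * x \<noteq> 0" and B: "1 - cnj c * y \<noteq> 0" and C: "1 - cnj c * c \<noteq> 0"
    and Q: "1 - cnj x * y \<noteq> 0"
    using denom_nz c x y by auto
  have A': "cnj (1 - cnj c * x) \<noteq> 0" using A by (metis complex_cnj_zero_iff)
  have "Mb (Mb c x) (Mb c y) = (Mb c y - Mb c x) / (1 - cnj (Mb c x) * Mb c y)"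
    by (simp add: Mb_def)
  also have "\<dots> = Mb x y * (cnj (1 - cnj c * x) / (1 - cnj c * x))"
    unfolding Mb_num[OF A B] Mb_den[OF A B] frac_aux[OF C A B A' Q] by (simp add: Mb_def)
  finally have e: "Mb (Mb c x) (Mb c y) = Mb x y * (cnj (1 - cnj c * x) / (1 - cnj c * x))" .
  have "norm (cnj (1 - cnj c * x)) = norm (1 - cnj c * x)" by (rule complex_mod_cnj)
  then have "norm (cnj (1 - cnj c * x) / (1 - cnj c * x)) = 1"
    using A by (simp only: norm_divide) simp
  then show ?thesis unfolding rho_def e norm_mult by (simp only: mult_1_right)
qed

lemma aut_two_points:
  assumes z: "z \<in> unit_disc" and w: "w \<in> unit_disc" and s: "s = rho z w" "s > 0"
  obtains \<phi> h where "\<phi> \<in> disc_aut" "\<phi> 0 = z" "\<phi> (complex_of_real s) = w"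
    "h holomorphic_on unit_disc" "\<And>v. v \<in> unit_disc \<Longrightarrow> h v \<in> unit_disc"
    "\<And>v. v \<in> unit_disc \<Longrightarrow> \<phi> (h v) = v" "\<And>q. q \<in> unit_disc \<Longrightarrow> h (\<phi> q) = q"
    "\<And>x y. x \<in> unit_disc \<Longrightarrow> y \<in> unit_disc \<Longrightarrow> rho (\<phi> x) (\<phi> y) = rho x y"
proof -
  have nz: "norm z < 1" and nw: "norm w < 1" using z w by auto
  define u where "u = Mb z w"
  have nu: "norm u = s" using s by (simp add: u_def rho_def)
  define l where "l = u / complex_of_real s"
  have nl: "norm l = 1" using nu s by (simp add: l_def norm_divide)
  have l0: "l \<noteq> 0" using nl by auto
  have ls: "l * complex_of_real s = u" using s by (simp add: l_def)
  define \<phi> where "\<phi> = (\<lambda>q. Mb (-z) (l * q))"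
  define h where "h = (\<lambda>v. Mb z v / l)"
  have nlq: "norm (l * q) < 1" if "q \<in> unit_disc" for q using that nl by (simp add: norm_mult)
  have \<phi>E: "\<phi> q \<in> unit_disc" if "q \<in> unit_disc" for q
    using Mb_lt1 [of "-z" "l*q"] nz nlq [OF that] by (simp add: \<phi>_def)
  have hE: "h v \<in> unit_disc" if "v \<in> unit_disc" for v
    using Mb_lt1 [of z v] nz that nl by (simp add: h_def norm_divide)
  have h\<phi>: "h (\<phi> q) = q" if "q \<in> unit_disc" for q
    using Mb_comp' [of z "l*q"] nz nlq [OF that] l0 by (simp add: h_def \<phi>_def)
  have \<phi>h: "\<phi> (h v) = v" if "v \<in> unit_disc" for v
    using Mb_comp [of z v] nz that l0 by (simp add: h_def \<phi>_def)
  have hol\<phi>: "\<phi> holomorphic_on unit_disc"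
  proof -
    have "(\<lambda>q. l * q) holomorphic_on unit_disc" by (intro holomorphic_intros)
    moreover have "Mb (-z) holomorphic_on (\<lambda>q. l * q) ` unit_disc"
      by (rule holomorphic_on_subset [OF Mb_holo]) (use nz nlq in auto)
    ultimately show ?thesis unfolding \<phi>_def using holomorphic_on_compose [of "\<lambda>q. l * q" unit_disc "Mb (-z)"]
      by (simp add: o_def)
  qed
  have holh: "h holomorphic_on unit_disc"
    unfolding h_def by (rule holomorphic_on_divide[OF Mb_holo[OF nz] holomorphic_on_const]) (use l0 in auto)
  have aut: "\<phi> \<in> disc_aut"
    by (rule disc_autI [OF hol\<phi> holh]) (use \<phi>E hE h\<phi> \<phi>h in auto)
  have \<phi>0: "\<phi> 0 = z" by (simp add: \<phi>_def Mb_def)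
  have \<phi>s: "\<phi> (complex_of_real s) = w"
    unfolding \<phi>_def ls u_def using Mb_comp [of z w] nz nw by simp
  have inv: "rho (\<phi> x) (\<phi> y) = rho x y" if "x \<in> unit_disc" "y \<in> unit_disc" for x y
    using rho_Mb [of "-z" "l*x" "l*y"] nz nlq that rho_rot [OF nl] by (simp add: \<phi>_def)
  show ?thesis using that aut \<phi>0 \<phi>s holh hE \<phi>h h\<phi> inv by blast
qed


lemma rho_tau:
  assumes s: "0 < s" "s < 1" and q: "norm q < 1"
  shows "s \<le> rho q (Mb (- complex_of_real s) q)"
proof -
  define S where "S = complex_of_real s"
  define w where "w = Mb (-S) q"
  have nS: "norm S < 1" using s by (simp add: S_def)
  have den: "1 + S * q \<noteq> 0" using denom_nz [of "-S" q] nS q by (simp add: S_def)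
  have w1: "norm w < 1" using Mb_lt1 [of "-S" q] nS q by (simp add: w_def)
  have dw: "1 - cnj q * w \<noteq> 0" using denom_nz [OF q w1] .
  have we: "w = (q + S) / (1 + S * q)" by (simp add: w_def Mb_def S_def)
  define D where "D = 1 + S * q - cnj q * q - S * cnj q"
  have num: "w - q = S * (1 - q * q) / (1 + S * q)"
    using den by (simp add: we field_simps)
  have dd: "1 - cnj q * w = D / (1 + S * q)"
    using den by (simp add: we D_def field_simps)
  have D0: "D \<noteq> 0" using dw dd by auto
  have "rho q w = norm (S * (1 - q * q)) / norm D"
    using den D0 by (simp add: rho_def Mb_def num dd norm_divide)
  also have "\<dots> = s * norm (1 - q * q) / norm D"
    using s by (simp add: S_def norm_mult)
  finally have r: "rho q w = s * norm (1 - q * q) / norm D" .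
  have sq: "(norm D)^2 \<le> (norm (1 - q * q))^2"
  proof -
    have "(norm D)^2 = (1 - (Re q)^2 - (Im q)^2)^2 + (2 * s * Im q)^2"
      unfolding cmod_power2 by (simp add: D_def S_def power2_eq_square algebra_simps)
    moreover have "(norm (1 - q * q))^2 = (1 - (Re q)^2 + (Im q)^2)^2 + (2 * Re q * Im q)^2"
      unfolding cmod_power2 by (simp add: power2_eq_square algebra_simps)
    moreover have "(1 - (Re q)^2 - (Im q)^2)^2 + (2 * s * Im q)^2 \<le> (1 - (Re q)^2 + (Im q)^2)^2 + (2 * Re q * Im q)^2"
    proof -
      have "(1 - (Re q)^2 + (Im q)^2)^2 + (2 * Re q * Im q)^2 - ((1 - (Re q)^2 - (Im q)^2)^2 + (2 * s * Im q)^2)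
            = 4 * (Im q)^2 * (1 - s^2)"
        by (simp add: power2_eq_square algebra_simps)
      moreover have "0 \<le> 4 * (Im q)^2 * (1 - s^2)" using s by (simp add: abs_square_le_1 less_imp_le)
      ultimately show ?thesis by linarith
    qed
    ultimately show ?thesis by simp
  qed
  have le: "norm D \<le> norm (1 - q * q)" using sq by (rule power2_le_imp_le) simp
  have "s * norm D \<le> s * norm (1 - q * q)" using le s by simp
  then have "s \<le> s * norm (1 - q * q) / norm D" using D0 by (simp add: field_simps)
  then show ?thesis using r by (simp add: w_def S_def)
qed

lemma tau_minus_fix:
  assumes s: "0 < s" "s < 1"
  obtains q0 where "q0 \<in> unit_disc" "Mb (- complex_of_real s) (- q0) = q0"
proof -
  define t where "t = sqrt (1 - s^2)"
  have ss: "s * s < 1 * 1" by (rule mult_strict_mono') (use s in auto)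
  have p1: "0 < 1 - s^2" using ss by (simp add: power2_eq_square)
  have p2: "1 - s^2 < 1" using s by simp
  have t: "0 < t" "t < 1" using p1 p2 by (simp_all add: t_def)
  have t2: "t^2 = 1 - s^2" using p1 by (simp add: t_def)
  define r where "r = (1 - t) / s"
  have r0: "0 < r" using t s by (simp add: r_def)
  have "1 - s < t"
  proof -
    have "s * s < s * 1" using s by (intro mult_strict_left_mono) auto
    moreover have "(1 - s)^2 = 1 - 2 * s + s * s" by (simp add: power2_eq_square algebra_simps)
    moreover have "s^2 = s * s" by (simp add: power2_eq_square)
    ultimately have "(1 - s)^2 < t^2" using t2 by linarith
    then show ?thesis by (rule power_less_imp_less_base) (use t in linarith)
  qed
  then have "1 - t < 1 * s" by simp
  then have r1: "r < 1" unfolding r_def by (simp only: pos_divide_less_eq[OF s(1)])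
  have sr: "s * r = 1 - t" using s by (simp add: r_def)
  have tt: "(1 - t) * (1 + t) = s * s" using t2 by (simp add: power2_eq_square algebra_simps)
  have "s * (r * (1 + t)) = s * s" using sr tt by (metis mult.assoc)
  then have rt: "r * (1 + t) = s" using s by simp
  have "s - r - r * (1 - s * r) = s - 2 * r + r * (s * r)" by (simp add: algebra_simps)
  also have "\<dots> = s - 2 * r + r * (1 - t)" by (simp only: sr)
  also have "\<dots> = s - r * (1 + t)" by (simp add: algebra_simps)
  finally have e3: "s - r - r * (1 - s * r) = s - r * (1 + t)" .
  have "s - r = r * (1 - s * r)" using e3 rt by simp
  have "s * r < 1 * 1" by (rule mult_strict_mono') (use s r0 r1 in auto)
  then have dr: "1 - s * r \<noteq> 0" by simp
  have fx: "(s - r) / (1 - s * r) = r"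
    using \<open>s - r = r * (1 - s * r)\<close> dr by (simp add: divide_eq_eq)
  have "Mb (- complex_of_real s) (- complex_of_real r) = complex_of_real ((s - r) / (1 - s * r))"
    by (simp add: Mb_def)
  then have "Mb (- complex_of_real s) (- complex_of_real r) = complex_of_real r"
    using fx by simp
  moreover have "complex_of_real r \<in> unit_disc" using r0 r1 by simp
  ultimately show ?thesis using that by blast
qed


lemma deriv_rel:
  assumes F: "F holomorphic_on unit_disc" and psi: "\<psi> holomorphic_on unit_disc"
    and psiE: "\<And>q. q \<in> unit_disc \<Longrightarrow> \<psi> q \<in> unit_disc"
    and eq: "\<And>q. q \<in> unit_disc \<Longrightarrow> F (\<psi> q) = F q"
    and p0: "\<psi> 0 = S" and S: "S \<in> unit_disc"
  shows "deriv F S * deriv \<psi> 0 = deriv F 0"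
proof -
  have z: "(0::complex) \<in> unit_disc" by simp
  have d\<psi>: "\<psi> field_differentiable at 0"
    using holomorphic_on_imp_differentiable_at [OF psi open_ball z] .
  have dF: "F field_differentiable at (\<psi> 0)"
    using holomorphic_on_imp_differentiable_at [OF F open_ball] S p0 by simp
  have "deriv (F \<circ> \<psi>) 0 = deriv F (\<psi> 0) * deriv \<psi> 0" by (rule deriv_chain [OF d\<psi> dF])
  moreover have "deriv (F \<circ> \<psi>) 0 = deriv F 0"
  proof (rule deriv_cong_ev)
    have "eventually (\<lambda>q. q \<in> unit_disc) (nhds 0)" by (rule eventually_nhds_in_open) auto
    then show "eventually (\<lambda>q. (F \<circ> \<psi>) q = F q) (nhds 0)"
      by (rule eventually_mono) (simp add: eq)
  qed simp
  ultimately show ?thesis using p0 by simp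
qed

lemma Mb_deriv_at:
  assumes "1 - cnj w * w \<noteq> 0"
  shows "(Mb w has_field_derivative 1 / (1 - cnj w * w)) (at w)"
proof -
  have "((\<lambda>z. (z - w) / (1 - cnj w * z)) has_field_derivative
          (1 * (1 - cnj w * w) - (w - w) * (- cnj w)) / ((1 - cnj w * w) * (1 - cnj w * w))) (at w)"
    using assms by (intro DERIV_divide) (auto intro!: derivative_eq_intros)
  moreover have "Mb w = (\<lambda>z. (z - w) / (1 - cnj w * z))" by (rule ext) (simp add: Mb_def)
  ultimately show ?thesis using assms by simp
qed

lemma schwarz_pm:
  assumes s: "0 < s" "s < 1" and S: "S = complex_of_real s"
    and hol: "\<psi> holomorphic_on unit_disc" and psiE: "\<And>q. q \<in> unit_disc \<Longrightarrow> \<psi> q \<in> unit_disc"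
    and p0: "\<psi> 0 = S" and d: "(deriv \<psi> 0)^2 = (1 - S * S)^2"
  shows "(\<forall>q\<in>unit_disc. \<psi> q = Mb (-S) q) \<or> (\<forall>q\<in>unit_disc. \<psi> q = Mb (-S) (-q))"
proof -
  have nS: "norm S < 1" using s S by simp
  have SE: "S \<in> unit_disc" using nS by simp
  have cS: "cnj S = S" using S by simp
  have dS: "1 - cnj S * S \<noteq> 0" using denom_nz [OF nS nS] .
  define chi where "chi = Mb S \<circ> \<psi>"
  have holchi: "chi holomorphic_on unit_disc"
    unfolding chi_def by (rule holomorphic_on_compose_gen [OF hol Mb_holo [OF nS]]) (use psiE in auto)
  have chi0: "chi 0 = 0" by (simp add: chi_def p0 Mb_def)
  have chi1: "norm (chi z) < 1" if "norm z < 1" for z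
    using Mb_lt1 [OF nS] psiE that by (simp add: chi_def)
  have z0: "(0::complex) \<in> unit_disc" by simp
  have "deriv chi 0 = deriv (Mb S) (\<psi> 0) * deriv \<psi> 0"
    unfolding chi_def
    by (rule deriv_chain [OF holomorphic_on_imp_differentiable_at [OF hol open_ball z0]])
       (use holomorphic_on_imp_differentiable_at [OF Mb_holo [OF nS] open_ball SE] p0 in simp)
  also have "deriv (Mb S) (\<psi> 0) = 1 / (1 - cnj S * S)"
    using DERIV_imp_deriv [OF Mb_deriv_at [OF dS]] p0 by simp
  finally have dchi: "deriv chi 0 = deriv \<psi> 0 / (1 - S * S)" using cS by simp
  have sq1: "(deriv chi 0)^2 = 1"
    using dS cS d unfolding dchi by (simp add: power_divide)
  have "norm (deriv chi 0) ^ 2 = 1" using sq1 by (metis norm_one norm_power)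
  then have "norm (deriv chi 0) = 1 \<or> norm (deriv chi 0) = -1" by (simp add: power2_eq_1_iff)
  then have n1: "norm (deriv chi 0) = 1" using norm_ge_zero[of "deriv chi 0"] by linarith
  obtain \<alpha> where \<alpha>: "\<And>z. norm z < 1 \<Longrightarrow> chi z = \<alpha> * z"
    using Schwarz_Lemma' [OF holchi chi0 chi1] n1 by blast
  have "deriv chi 0 = deriv (\<lambda>z. \<alpha> * z) 0"
  proof (rule deriv_cong_ev)
    have "eventually (\<lambda>q. q \<in> unit_disc) (nhds 0)" by (rule eventually_nhds_in_open) auto
    then show "eventually (\<lambda>q. chi q = \<alpha> * q) (nhds 0)"
      by (rule eventually_mono) (simp add: \<alpha>)
  qed simp
  then have da: "deriv chi 0 = \<alpha>" by simp
  have "\<alpha> = 1 \<or> \<alpha> = -1" using sq1 unfolding da by (simp add: power2_eq_1_iff)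
  moreover have "\<psi> q = Mb (-S) (\<alpha> * q)" if q: "q \<in> unit_disc" for q
  proof -
    have "\<psi> q = Mb (-S) (Mb S (\<psi> q))" using Mb_comp [OF nS] psiE [OF q] by simp
    also have "Mb S (\<psi> q) = \<alpha> * q" using \<alpha> [of q] q by (simp add: chi_def)
    finally show ?thesis .
  qed
  ultimately show ?thesis by auto
qed

lemma frac_aux2:
  fixes A B S :: complex
  assumes "B \<noteq> 0" "B - S * A \<noteq> 0"
  shows "(S - A / B) / (1 - S * (A / B)) = (S * B - A) / (B - S * A)"
  using assms by (simp add: field_simps)

lemma sigma_props:
  assumes s: "0 < s" "s < 1" and S: "S = complex_of_real s"
  defines "\<sigma> \<equiv> \<lambda>q. (S - q) / (1 - S * q)"
  shows "\<sigma> \<in> disc_aut" "\<sigma> 0 = S" "\<sigma> S = 0"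
    "(\<sigma> has_field_derivative (S * S - 1)) (at 0)"
    "(\<sigma> has_field_derivative 1 / (S * S - 1)) (at S)"
proof -
  have nS: "norm S < 1" using s S by simp
  have cS: "cnj S = S" using S by simp
  have den: "1 - S * q \<noteq> 0" if "q \<in> unit_disc" for q
    using denom_nz [OF nS] that cS by simp
  have SS: "1 - S * S \<noteq> 0" using den [of S] nS by simp
  have SS': "S * S - 1 \<noteq> 0" using SS by (metis eq_iff_diff_eq_0)
  have sM: "\<sigma> q = - Mb S q" for q by (simp add: \<sigma>_def Mb_def cS minus_divide_left)
  have \<sigma>E: "\<sigma> q \<in> unit_disc" if "q \<in> unit_disc" for q
    using Mb_lt1 [OF nS, of q] that by (simp add: sM)
  have \<sigma>\<sigma>: "\<sigma> (\<sigma> q) = q" if "q \<in> unit_disc" for q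
  proof -
    have d: "1 - S * q \<noteq> 0" using den that .
    have d2: "(1 - S * q) - S * (S - q) \<noteq> 0" using SS by (simp add: algebra_simps)
    have "\<sigma> (\<sigma> q) = (S * (1 - S * q) - (S - q)) / ((1 - S * q) - S * (S - q))"
      unfolding \<sigma>_def by (rule frac_aux2 [OF d d2])
    also have "\<dots> = (q * (1 - S * S)) / (1 - S * S)" by (simp add: algebra_simps)
    also have "\<dots> = q" using SS by simp
    finally show ?thesis .
  qed
  have hol: "\<sigma> holomorphic_on unit_disc"
    unfolding \<sigma>_def by (intro holomorphic_intros) (use den in auto)
  show "\<sigma> \<in> disc_aut"
    by (rule disc_autI [OF hol hol]) (use \<sigma>E \<sigma>\<sigma> in auto)
  show "\<sigma> 0 = S" by (simp add: \<sigma>_def)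
  show "\<sigma> S = 0" by (simp add: \<sigma>_def)
  have gen: "(\<sigma> has_field_derivative (S * S - 1) / ((1 - S * q) * (1 - S * q))) (at q)"
    if "q \<in> unit_disc" for q
  proof -
    have "(\<sigma> has_field_derivative ((- 1) * (1 - S * q) - (S - q) * (- S)) / ((1 - S * q) * (1 - S * q))) (at q)"
    proof -
      have "S * q \<noteq> 1" using den[OF that] by simp
      then show ?thesis unfolding \<sigma>_def by (intro DERIV_divide) (auto intro!: derivative_eq_intros)
    qed
    moreover have "(- 1) * (1 - S * q) - (S - q) * (- S) = S * S - 1" by (simp add: algebra_simps)
    ultimately show ?thesis by metis
  qed
  show "(\<sigma> has_field_derivative (S * S - 1)) (at 0)" using gen [of 0] by simp
  have sq: "(1 - S * S) * (1 - S * S) = (S * S - 1) * (S * S - 1)" by (simp add: algebra_simps)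
  have "(S * S - 1) / ((1 - S * S) * (1 - S * S)) = (S * S - 1) / ((S * S - 1) * (S * S - 1))"
    by (simp only: sq)
  also have "\<dots> = 1 / (S * S - 1)" using SS' by simp
  finally have "(S * S - 1) / ((1 - S * S) * (1 - S * S)) = 1 / (S * S - 1)" .
  then show "(\<sigma> has_field_derivative 1 / (S * S - 1)) (at S)" using gen [of S] nS by simp
qed


lemma rho_cont:
  assumes hol: "g holomorphic_on unit_disc" and gE: "\<And>y. y \<in> unit_disc \<Longrightarrow> g y \<in> unit_disc"
  shows "continuous_on unit_disc (\<lambda>z. rho z (g z))"
proof -
  have cg: "continuous_on unit_disc g" using holomorphic_on_imp_continuous_on [OF hol] .
  have "continuous_on unit_disc (\<lambda>z. norm ((g z - z) / (1 - cnj z * g z)))"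
    by (intro continuous_intros cg) (use denom_nz gE in auto)
  then show ?thesis by (simp add: rho_def Mb_def)
qed

lemma disp_range:
  assumes hol: "g holomorphic_on unit_disc" and gE: "\<And>y. y \<in> unit_disc \<Longrightarrow> g y \<in> unit_disc"
    and x: "x \<in> unit_disc" and s: "rho 0 (g 0) \<le> s" "s \<le> rho x (g x)"
  obtains z where "z \<in> unit_disc" "rho z (g z) = s"
proof -
  have "connected ((\<lambda>z. rho z (g z)) ` unit_disc)"
    by (rule connected_continuous_image [OF rho_cont [OF hol gE] convex_connected[OF convex_ball]])
  moreover have "rho 0 (g 0) \<in> (\<lambda>z. rho z (g z)) ` unit_disc" by simp
  moreover have "rho x (g x) \<in> (\<lambda>z. rho z (g z)) ` unit_disc" using x by simp
  ultimately have "{rho 0 (g 0) .. rho x (g x)} \<subseteq> (\<lambda>z. rho z (g z)) ` unit_disc"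
    by (rule connected_contains_Icc)
  then have "s \<in> (\<lambda>z. rho z (g z)) ` unit_disc" using s by auto
  then show ?thesis using that by blast
qed

lemma rho_lt1: "norm z < 1 \<Longrightarrow> norm w < 1 \<Longrightarrow> rho z w < 1"
  by (simp add: rho_def Mb_lt1)

lemma cov_comp_regular:
  assumes hol: "p holomorphic_on unit_disc" and cov: "covering_space unit_disc p D"
    and phi: "\<phi> \<in> disc_aut" and q: "q \<in> unit_disc"
  shows "deriv (p \<circ> \<phi>) q \<noteq> 0"
proof -
  have hphi: "\<phi> holomorphic_on unit_disc" and phE: "\<phi> ` unit_disc = unit_disc"
    using phi unfolding disc_aut_def by auto
  have pq: "\<phi> q \<in> unit_disc" using phE q by blast
  have "deriv (p \<circ> \<phi>) q = deriv p (\<phi> q) * deriv \<phi> q"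
    by (rule deriv_chain [OF holomorphic_on_imp_differentiable_at [OF hphi open_ball q]
          holomorphic_on_imp_differentiable_at [OF hol open_ball pq]])
  moreover have "deriv p (\<phi> q) \<noteq> 0" using cov_regular [OF hol cov pq] .
  moreover have "deriv \<phi> q \<noteq> 0" using disc_aut_regular [OF phi q] .
  ultimately show ?thesis by simp
qed


lemma side_setup:
  assumes hol: "p holomorphic_on unit_disc" and cov: "covering_space unit_disc p D"
    and gh: "g holomorphic_on unit_disc" and gE: "\<And>y. y \<in> unit_disc \<Longrightarrow> g y \<in> unit_disc"
    and pg: "\<And>y. y \<in> unit_disc \<Longrightarrow> p (g y) = p y"
    and z: "z \<in> unit_disc" and s: "rho z (g z) = s" "0 < s" "s < 1" and Sd: "S = complex_of_real s"
  obtains \<phi> h where "\<phi> \<in> disc_aut" "\<phi> 0 = z" "\<phi> (S) = g z"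
    "h holomorphic_on unit_disc" "\<And>v. v \<in> unit_disc \<Longrightarrow> h v \<in> unit_disc"
    "\<And>v. v \<in> unit_disc \<Longrightarrow> \<phi> (h v) = v" "\<And>q. q \<in> unit_disc \<Longrightarrow> h (\<phi> q) = q"
    "\<And>x y. x \<in> unit_disc \<Longrightarrow> y \<in> unit_disc \<Longrightarrow> rho (\<phi> x) (\<phi> y) = rho x y"
    "(\<lambda>q. h (g (\<phi> q))) holomorphic_on unit_disc"
    "\<And>q. q \<in> unit_disc \<Longrightarrow> h (g (\<phi> q)) \<in> unit_disc"
    "h (g (\<phi> 0)) = S"
    "deriv (p \<circ> \<phi>) (S) * deriv (\<lambda>q. h (g (\<phi> q))) 0 = deriv (p \<circ> \<phi>) 0"
    "deriv (p \<circ> \<phi>) 0 \<noteq> 0" "deriv (p \<circ> \<phi>) (S) \<noteq> 0"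
    "p (\<phi> 0) = p (\<phi> (S))"
proof -
  have gz: "g z \<in> unit_disc" using gE z .
  obtain \<phi> h where A: "\<phi> \<in> disc_aut" "\<phi> 0 = z" "\<phi> (S) = g z"
    "h holomorphic_on unit_disc" "\<And>v. v \<in> unit_disc \<Longrightarrow> h v \<in> unit_disc"
    "\<And>v. v \<in> unit_disc \<Longrightarrow> \<phi> (h v) = v" "\<And>q. q \<in> unit_disc \<Longrightarrow> h (\<phi> q) = q"
    "\<And>x y. x \<in> unit_disc \<Longrightarrow> y \<in> unit_disc \<Longrightarrow> rho (\<phi> x) (\<phi> y) = rho x y"
    using aut_two_points [OF z gz s(1)[symmetric] s(2)] unfolding Sd by blast
  have hphi: "\<phi> holomorphic_on unit_disc" and phE: "\<phi> ` unit_disc = unit_disc"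
    using A(1) unfolding disc_aut_def by auto
  have phE': "\<phi> q \<in> unit_disc" if "q \<in> unit_disc" for q using phE that by blast
  have SE: "S \<in> unit_disc" using s Sd by simp
  define psi where "psi = (\<lambda>q. h (g (\<phi> q)))"
  have psiE: "psi q \<in> unit_disc" if "q \<in> unit_disc" for q
    unfolding psi_def using A(5) gE phE' that by blast
  have holpsi: "psi holomorphic_on unit_disc"
  proof -
    have "(h \<circ> (g \<circ> \<phi>)) holomorphic_on unit_disc"
      by (intro holomorphic_on_compose_gen [OF holomorphic_on_compose_gen [OF hphi gh] A(4)])
         (use gE phE' in auto)
    then show ?thesis by (simp add: psi_def o_def)
  qed
  have psi0: "psi 0 = S" unfolding psi_def using A(2,3,7) SE by metis
  have holF: "(p \<circ> \<phi>) holomorphic_on unit_disc"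
    by (rule holomorphic_on_compose_gen [OF hphi hol]) (use phE' in auto)
  have Feq: "(p \<circ> \<phi>) (psi q) = (p \<circ> \<phi>) q" if "q \<in> unit_disc" for q
  proof -
    have "\<phi> (psi q) = g (\<phi> q)" unfolding psi_def using A(6) gE phE' that by blast
    then show ?thesis using pg phE' that by simp
  qed
  have rel: "deriv (p \<circ> \<phi>) (S) * deriv psi 0 = deriv (p \<circ> \<phi>) 0"
    by (rule deriv_rel [OF holF holpsi psiE Feq psi0 SE])
  have n0: "deriv (p \<circ> \<phi>) 0 \<noteq> 0" by (rule cov_comp_regular [OF hol cov A(1)]) simp
  have ns: "deriv (p \<circ> \<phi>) (S) \<noteq> 0" by (rule cov_comp_regular [OF hol cov A(1) SE])
  have pp: "p (\<phi> 0) = p (\<phi> (S))" using A(2,3) pg z by simp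
  show ?thesis
    using that [OF A holpsi[unfolded psi_def] psiE[unfolded psi_def] psi0[unfolded psi_def]
        rel[unfolded psi_def] n0 ns pp] by blast
qed

theorem mainTheorem6:
  fixes p1 p2 :: "complex \<Rightarrow> complex" and D1 D2 :: "complex set"
  assumes "is_domain D1" and "is_domain D2"
    and "holo_univ_covering p1 D1" and "holo_univ_covering p2 D2"
    and "\<not> inj_on p1 unit_disc" and "\<not> inj_on p2 unit_disc"
  shows "\<exists>\<phi>1\<in>disc_aut. \<exists>\<phi>2\<in>disc_aut. \<exists>q1\<in>unit_disc. \<exists>q2\<in>unit_disc. q1 \<noteq> q2 \<and>
    p1 (\<phi>1 q1) = p1 (\<phi>1 q2) \<and> p2 (\<phi>2 q1) = p2 (\<phi>2 q2) \<and>
    deriv (p1 \<circ> \<phi>1) q1 * deriv (p2 \<circ> \<phi>2) q2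
      - deriv (p1 \<circ> \<phi>1) q2 * deriv (p2 \<circ> \<phi>2) q1 \<noteq> 0"
proof -
  have hol1: "p1 holomorphic_on unit_disc" and cov1: "covering_space unit_disc p1 D1"
    using assms(3) by (auto simp: holo_univ_covering_def)
  have hol2: "p2 holomorphic_on unit_disc" and cov2: "covering_space unit_disc p2 D2"
    using assms(4) by (auto simp: holo_univ_covering_def)
  obtain g1 where g1: "g1 holomorphic_on unit_disc" "\<And>y. y \<in> unit_disc \<Longrightarrow> g1 y \<in> unit_disc"
    "\<And>y. y \<in> unit_disc \<Longrightarrow> p1 (g1 y) = p1 y" "\<And>y. y \<in> unit_disc \<Longrightarrow> g1 y \<noteq> y"
    using deck_exists [OF hol1 cov1 assms(5)] by blast
  obtain g2 where g2: "g2 holomorphic_on unit_disc" "\<And>y. y \<in> unit_disc \<Longrightarrow> g2 y \<in> unit_disc"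
    "\<And>y. y \<in> unit_disc \<Longrightarrow> p2 (g2 y) = p2 y" "\<And>y. y \<in> unit_disc \<Longrightarrow> g2 y \<noteq> y"
    using deck_exists [OF hol2 cov2 assms(6)] by blast
  have z0: "(0::complex) \<in> unit_disc" by simp
  define m where "m = max (rho 0 (g1 0)) (rho 0 (g2 0))"
  have m1: "m < 1" unfolding m_def using rho_lt1 g1(2) g2(2) z0 by (simp add: max_def) 
  have m0: "0 \<le> m" unfolding m_def rho_def by (simp add: max_def)
  obtain x1 where x1: "x1 \<in> unit_disc" "rho x1 (g1 x1) > m"
    using disp_unbounded [OF g1(1) g1(2) g1(4) m1] by blast
  obtain x2 where x2: "x2 \<in> unit_disc" "rho x2 (g2 x2) > m"
    using disp_unbounded [OF g2(1) g2(2) g2(4) m1] by blast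
  define s where "s = min (rho x1 (g1 x1)) (rho x2 (g2 x2))"
  have sm: "m < s" using x1 x2 by (simp add: s_def)
  have s0: "0 < s" using sm m0 by simp
  have "rho x1 (g1 x1) < 1" using rho_lt1 x1(1) g1(2)[OF x1(1)] by simp
  then have s1: "s < 1" by (simp add: s_def min_less_iff_disj)
  have "rho 0 (g1 0) \<le> s" "s \<le> rho x1 (g1 x1)" using sm by (auto simp: m_def s_def)
  then obtain z1 where z1: "z1 \<in> unit_disc" "rho z1 (g1 z1) = s"
    using disp_range [OF g1(1) g1(2) x1(1)] by blast
  have "rho 0 (g2 0) \<le> s" "s \<le> rho x2 (g2 x2)" using sm by (auto simp: m_def s_def)
  then obtain z2 where z2: "z2 \<in> unit_disc" "rho z2 (g2 z2) = s"
    using disp_range [OF g2(1) g2(2) x2(1)] by blast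
  define S where "S = complex_of_real s"
  have SE: "S \<in> unit_disc" using s0 s1 by (simp add: S_def)
  have S0: "(0::complex) \<noteq> S" using s0 by (simp add: S_def)
  obtain \<phi>1 h1 where P1: "\<phi>1 \<in> disc_aut" "\<phi>1 0 = z1" "\<phi>1 S = g1 z1"
    "h1 holomorphic_on unit_disc" "\<And>v. v \<in> unit_disc \<Longrightarrow> h1 v \<in> unit_disc"
    "\<And>v. v \<in> unit_disc \<Longrightarrow> \<phi>1 (h1 v) = v" "\<And>q. q \<in> unit_disc \<Longrightarrow> h1 (\<phi>1 q) = q"
    "\<And>x y. x \<in> unit_disc \<Longrightarrow> y \<in> unit_disc \<Longrightarrow> rho (\<phi>1 x) (\<phi>1 y) = rho x y"
    "(\<lambda>q. h1 (g1 (\<phi>1 q))) holomorphic_on unit_disc"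
    "\<And>q. q \<in> unit_disc \<Longrightarrow> h1 (g1 (\<phi>1 q)) \<in> unit_disc"
    "h1 (g1 (\<phi>1 0)) = S"
    "deriv (p1 \<circ> \<phi>1) S * deriv (\<lambda>q. h1 (g1 (\<phi>1 q))) 0 = deriv (p1 \<circ> \<phi>1) 0"
    "deriv (p1 \<circ> \<phi>1) 0 \<noteq> 0" "deriv (p1 \<circ> \<phi>1) S \<noteq> 0"
    "p1 (\<phi>1 0) = p1 (\<phi>1 S)"
    using side_setup [OF hol1 cov1 g1(1) g1(2) g1(3) z1(1) z1(2) s0 s1 S_def] by blast
  obtain \<phi>2 h2 where P2: "\<phi>2 \<in> disc_aut" "\<phi>2 0 = z2" "\<phi>2 S = g2 z2"
    "h2 holomorphic_on unit_disc" "\<And>v. v \<in> unit_disc \<Longrightarrow> h2 v \<in> unit_disc"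
    "\<And>v. v \<in> unit_disc \<Longrightarrow> \<phi>2 (h2 v) = v" "\<And>q. q \<in> unit_disc \<Longrightarrow> h2 (\<phi>2 q) = q"
    "\<And>x y. x \<in> unit_disc \<Longrightarrow> y \<in> unit_disc \<Longrightarrow> rho (\<phi>2 x) (\<phi>2 y) = rho x y"
    "(\<lambda>q. h2 (g2 (\<phi>2 q))) holomorphic_on unit_disc"
    "\<And>q. q \<in> unit_disc \<Longrightarrow> h2 (g2 (\<phi>2 q)) \<in> unit_disc"
    "h2 (g2 (\<phi>2 0)) = S"
    "deriv (p2 \<circ> \<phi>2) S * deriv (\<lambda>q. h2 (g2 (\<phi>2 q))) 0 = deriv (p2 \<circ> \<phi>2) 0"
    "deriv (p2 \<circ> \<phi>2) 0 \<noteq> 0" "deriv (p2 \<circ> \<phi>2) S \<noteq> 0"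
    "p2 (\<phi>2 0) = p2 (\<phi>2 S)"
    using side_setup [OF hol2 cov2 g2(1) g2(2) g2(3) z2(1) z2(2) s0 s1 S_def] by blast
  define a1 where "a1 = deriv (p1 \<circ> \<phi>1) 0"
  define b1 where "b1 = deriv (p1 \<circ> \<phi>1) S"
  define a2 where "a2 = deriv (p2 \<circ> \<phi>2) 0"
  define b2 where "b2 = deriv (p2 \<circ> \<phi>2) S"
  define d1 where "d1 = deriv (\<lambda>q. h1 (g1 (\<phi>1 q))) 0"
  define d2 where "d2 = deriv (\<lambda>q. h2 (g2 (\<phi>2 q))) 0"
  have r1: "b1 * d1 = a1" and r2: "b2 * d2 = a2" using P1(12) P2(12) by (simp_all add: a1_def b1_def d1_def a2_def b2_def d2_def)
  have nb1: "b1 \<noteq> 0" and nb2: "b2 \<noteq> 0" using P1(14) P2(14) by (simp_all add: b1_def b2_def)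
  define \<sigma> where "\<sigma> = (\<lambda>q. (S - q) / (1 - S * q))"
  have sig: "\<sigma> \<in> disc_aut" "\<sigma> 0 = S" "\<sigma> S = 0"
    "(\<sigma> has_field_derivative (S * S - 1)) (at 0)"
    "(\<sigma> has_field_derivative 1 / (S * S - 1)) (at S)"
    using sigma_props [OF s0 s1 S_def] unfolding \<sigma>_def by auto
  show ?thesis
  proof (cases "a1 * b2 - b1 * a2 = 0")
    case False
    have "0 \<noteq> S \<and> p1 (\<phi>1 0) = p1 (\<phi>1 S) \<and> p2 (\<phi>2 0) = p2 (\<phi>2 S) \<and>
      deriv (p1 \<circ> \<phi>1) 0 * deriv (p2 \<circ> \<phi>2) S - deriv (p1 \<circ> \<phi>1) S * deriv (p2 \<circ> \<phi>2) 0 \<noteq> 0"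
      using False P1(15) P2(15) S0 by (simp add: a1_def b1_def a2_def b2_def)
    then show ?thesis using P1(1) P2(1) SE z0 by blast
  next
    case det0: True
    have eqd: "d1 = d2"
    proof -
      have "a1 * b2 - b1 * a2 = b1 * b2 * (d1 - d2)"
        unfolding r1[symmetric] r2[symmetric] by (simp add: algebra_simps)
      then have "b1 * b2 * (d1 - d2) = 0" using det0 by simp
      then show ?thesis using nb1 nb2 by simp
    qed
    have holF2: "(p2 \<circ> \<phi>2) holomorphic_on unit_disc"
    proof -
      have "\<phi>2 holomorphic_on unit_disc" "\<phi>2 ` unit_disc = unit_disc"
        using P2(1) unfolding disc_aut_def by auto
      then show ?thesis by (intro holomorphic_on_compose_gen [OF _ hol2]) auto
    qed
    have dF2: "(p2 \<circ> \<phi>2) field_differentiable at q" if "q \<in> unit_disc" for q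
      using holomorphic_on_imp_differentiable_at [OF holF2 open_ball that] .
    have e0: "deriv (p2 \<circ> (\<phi>2 \<circ> \<sigma>)) 0 = b2 * (S * S - 1)"
    proof -
      have "deriv ((p2 \<circ> \<phi>2) \<circ> \<sigma>) 0 = deriv (p2 \<circ> \<phi>2) (\<sigma> 0) * deriv \<sigma> 0"
        by (rule deriv_chain) (use sig dF2 SE field_differentiable_def in auto)
      then show ?thesis using sig DERIV_imp_deriv [OF sig(4)] by (simp add: b2_def o_assoc)
    qed
    have eS: "deriv (p2 \<circ> (\<phi>2 \<circ> \<sigma>)) S = a2 * (1 / (S * S - 1))"
    proof -
      have "deriv ((p2 \<circ> \<phi>2) \<circ> \<sigma>) S = deriv (p2 \<circ> \<phi>2) (\<sigma> S) * deriv \<sigma> S"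
        by (rule deriv_chain) (use sig dF2 z0 field_differentiable_def in auto)
      then show ?thesis using sig DERIV_imp_deriv [OF sig(5)] by (simp add: a2_def o_assoc)
    qed
    show ?thesis
    proof (cases "a1 * (a2 * (1 / (S * S - 1))) - b1 * (b2 * (S * S - 1)) = 0")
      case False
      have aut: "\<phi>2 \<circ> \<sigma> \<in> disc_aut" by (rule disc_aut_comp [OF P2(1) sig(1)])
      have pp: "p2 ((\<phi>2 \<circ> \<sigma>) 0) = p2 ((\<phi>2 \<circ> \<sigma>) S)" using P2(15) sig by simp
      have "0 \<noteq> S \<and> p1 (\<phi>1 0) = p1 (\<phi>1 S) \<and> p2 ((\<phi>2 \<circ> \<sigma>) 0) = p2 ((\<phi>2 \<circ> \<sigma>) S) \<and>
        deriv (p1 \<circ> \<phi>1) 0 * deriv (p2 \<circ> (\<phi>2 \<circ> \<sigma>)) S - deriv (p1 \<circ> \<phi>1) S * deriv (p2 \<circ> (\<phi>2 \<circ> \<sigma>)) 0 \<noteq> 0"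
        using False P1(15) pp S0 e0 eS by (simp add: a1_def b1_def)
      then show ?thesis using P1(1) aut SE z0 by blast
    next
      case det1: True
      have SS': "S * S - 1 \<noteq> 0"
      proof
        assume "S * S - 1 = 0"
        then have "norm (S * S) = 1" by simp
        moreover have "norm (S * S) < 1"
        proof -
          have nS: "norm S < 1" using SE by simp
          have "norm S * norm S < 1 * 1" by (rule mult_strict_mono') (use nS in auto)
          then show ?thesis by (simp add: norm_mult)
        qed
        ultimately show False by simp
      qed
      have "b1 * b2 * (d1 * d2 - (S * S - 1)^2) = 0"
      proof -
        have "(a1 * (a2 * (1 / (S * S - 1))) - b1 * (b2 * (S * S - 1))) * (S * S - 1)
              = b1 * b2 * (d1 * d2 - (S * S - 1)^2)"
          unfolding r1[symmetric] r2[symmetric] using SS' by (simp add: field_simps power2_eq_square)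
        then show ?thesis using det1 by simp
      qed
      then have "d2 * d2 = (S * S - 1)^2" using nb1 nb2 eqd by simp
      then have dd: "(deriv (\<lambda>q. h2 (g2 (\<phi>2 q))) 0)^2 = (1 - S * S)^2"
        by (simp add: d2_def power2_eq_square algebra_simps)
      have cases: "(\<forall>q\<in>unit_disc. h2 (g2 (\<phi>2 q)) = Mb (-S) q) \<or> (\<forall>q\<in>unit_disc. h2 (g2 (\<phi>2 q)) = Mb (-S) (-q))"
        by (rule schwarz_pm [OF s0 s1 S_def P2(9) P2(10) P2(11) dd])
      have conj: "g2 (\<phi>2 q) = \<phi>2 (h2 (g2 (\<phi>2 q)))" if "q \<in> unit_disc" for q
      proof -
        have "\<phi>2 q \<in> unit_disc" using P2(1) that unfolding disc_aut_def by blast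
        then show ?thesis using P2(6) g2(2) by simp
      qed
      show ?thesis
      proof (cases "\<forall>q\<in>unit_disc. h2 (g2 (\<phi>2 q)) = Mb (-S) q")
        case True
        define q where "q = h2 0"
        have qE: "q \<in> unit_disc" using P2(5) z0 by (simp add: q_def)
        have pq: "\<phi>2 q = 0" using P2(6) z0 by (simp add: q_def)
        have c1: "h2 (g2 (\<phi>2 q)) = Mb (-S) q" using True qE by blast
        have "g2 (\<phi>2 q) = \<phi>2 (Mb (-S) q)" using conj [OF qE] unfolding c1 .
        then have "g2 0 = \<phi>2 (Mb (-S) q)" unfolding pq .
        then have "rho 0 (g2 0) = rho (\<phi>2 q) (\<phi>2 (Mb (-S) q))" using pq by simp
        also have "\<dots> = rho q (Mb (-S) q)"
        proof (rule P2(8) [OF qE])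
          show "Mb (-S) q \<in> unit_disc" using Mb_lt1 [of "-S" q] SE qE by simp
        qed
        also have "\<dots> \<ge> s" unfolding S_def by (rule rho_tau [OF s0 s1]) (use qE in simp)
        finally have "s \<le> rho 0 (g2 0)" .
        then show ?thesis using sm m_def by simp
      next
        case False
        then have mm: "\<forall>q\<in>unit_disc. h2 (g2 (\<phi>2 q)) = Mb (-S) (-q)" using cases by blast
        obtain q0 where q0: "q0 \<in> unit_disc" "Mb (- complex_of_real s) (- q0) = q0"
          using tau_minus_fix [OF s0 s1] by blast
        have "g2 (\<phi>2 q0) = \<phi>2 q0" using conj [OF q0(1)] mm q0 by (simp add: S_def)
        moreover have "\<phi>2 q0 \<in> unit_disc" using P2(1) q0(1) unfolding disc_aut_def by blast
        ultimately show ?thesis using g2(4) by blast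
      qed
    qed
  qed
qed


end
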